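(* For every graph $G=(V,E)$ with at least one edge, $av_1(G)\ge 2$. Equality holds if and only if $N(u)\cup N(v)=V$ for every edge $uv\in E$. In particular, for $n\ge 2$ the star $S_n$ is the unique $n$-vertex tree minimising $av_1$, and it is one of the $n$-vertex graphs with at least one edge minimising $av_1$.
   Context: All graphs are finite and simple. For a graph $G=(V,E)$, a set $S\subseteq V$ is a $1$-nearly independent vertex set if the subgraph induced by $S$ has exactly one edge. $\sigma_1(G)$ is the number of such sets, $S_1(G)$ the sum of their sizes, and $av_1(G)=S_1(G)/\sigma_1(G)$. $N(v)$ is the set of neighbours of $v$. $S_n$ is the star on $n$ vertices. *)

theory Defs
  imports Main Complex_Main
begin

definition graph :: "'a set \<Rightarrow> 'a set set \<Rightarrow> bool" where
  "graph V E \<longleftrightarrow> finite V \<and> (\<forall>e\<in>E. e \<subseteq> V \<and> card e = 2)"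

definition nbrs :: "'a set set \<Rightarrow> 'a \<Rightarrow> 'a set" where
  "nbrs E v = {u. {u, v} \<in> E}"

definition nearly_indep1 :: "'a set \<Rightarrow> 'a set set \<Rightarrow> 'a set \<Rightarrow> bool" where
  "nearly_indep1 V E S \<longleftrightarrow> S \<subseteq> V \<and> card {e\<in>E. e \<subseteq> S} = 1"

definition sigma1 :: "'a set \<Rightarrow> 'a set set \<Rightarrow> nat" where
  "sigma1 V E = card {S. nearly_indep1 V E S}"

definition S1 :: "'a set \<Rightarrow> 'a set set \<Rightarrow> nat" where
  "S1 V E = (\<Sum>S\<in>{S. nearly_indep1 V E S}. card S)"

definition av1 :: "'a set \<Rightarrow> 'a set set \<Rightarrow> real" where
  "av1 V E = real (S1 V E) / real (sigma1 V E)"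

definition connected_graph :: "'a set \<Rightarrow> 'a set set \<Rightarrow> bool" where
  "connected_graph V E \<longleftrightarrow>
     (\<forall>u\<in>V. \<forall>v\<in>V. (u, v) \<in> {(x, y). {x, y} \<in> E}\<^sup>*)"

definition has_cycle :: "'a set \<Rightarrow> 'a set set \<Rightarrow> bool" where
  "has_cycle V E \<longleftrightarrow> (\<exists>vs. length vs \<ge> 3 \<and> distinct vs \<and> set vs \<subseteq> V \<and>
     (\<forall>i. i + 1 < length vs \<longrightarrow> {vs ! i, vs ! (i + 1)} \<in> E) \<and> {last vs, hd vs} \<in> E)"

definition is_tree :: "'a set \<Rightarrow> 'a set set \<Rightarrow> bool" where
  "is_tree V E \<longleftrightarrow> graph V E \<and> V \<noteq> {} \<and> connected_graph V E \<and> \<not> has_cycle V E"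

definition star_V :: "nat \<Rightarrow> nat set" where
  "star_V n = {0..<n}"

definition star_E :: "nat \<Rightarrow> nat set set" where
  "star_E n = {{0, i} | i. i \<in> {1..<n}}"

definition is_star :: "'a set \<Rightarrow> 'a set set \<Rightarrow> bool" where
  "is_star V E \<longleftrightarrow> (\<exists>c\<in>V. E = {{c, v} | v. v \<in> V - {c}})"

end

theory Submission
  imports Defs
begin

lemma graph_finE: "graph V E \<Longrightarrow> finite E"
proof -
  assume g: "graph V E"
  have "E \<subseteq> Pow V" using g unfolding graph_def by auto
  moreover have "finite (Pow V)" using g unfolding graph_def by simp
  ultimately show "finite E" by (rule finite_subset)
qed

lemma graph_edge: "graph V E \<Longrightarrow> e \<in> E \<Longrightarrow> \<exists>u v. e = {u,v} \<and> u \<noteq> v \<and> u\<in>V \<and> v\<in>V"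
proof -
  assume g: "graph V E" and e: "e \<in> E"
  then have "e \<subseteq> V" "card e = 2" unfolding graph_def by auto
  then obtain x y where "e = {x,y}" "x \<noteq> y" "{x,y} \<subseteq> V" unfolding card_2_iff by auto
  then show ?thesis by auto
qed

lemma edge_NI:
  assumes g: "graph V E" and e: "e \<in> E"
  shows "nearly_indep1 V E e"
proof -
  have ce: "card e = 2" "e \<subseteq> V" using g e by (auto simp: graph_def)
  have "{e'\<in>E. e' \<subseteq> e} = {e}"
  proof
    show "{e'\<in>E. e' \<subseteq> e} \<subseteq> {e}"
    proof
      fix x assume x: "x \<in> {e'\<in>E. e' \<subseteq> e}"
      have "card x = 2" using g x by (auto simp: graph_def)
      moreover have "finite e" using ce(1) by (cases "finite e") auto
      ultimately have "x = e" using x ce by (intro card_subset_eq) auto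
      then show "x \<in> {e}" by simp
    qed
  qed (use e in auto)
  then show ?thesis using ce by (simp add: nearly_indep1_def)
qed

lemma NI_card:
  assumes g: "graph V E" and S: "nearly_indep1 V E S"
  shows "card S \<ge> 2"
proof -
  have "{e\<in>E. e \<subseteq> S} \<noteq> {}" 
  proof
    assume "{e\<in>E. e \<subseteq> S} = {}"
    then have "card {e\<in>E. e \<subseteq> S} = 0" by (simp only: card.empty)
    moreover have "card {e\<in>E. e \<subseteq> S} = 1" using S unfolding nearly_indep1_def by blast
    ultimately show False by simp
  qed
  then obtain e where e: "e \<in> E" "e \<subseteq> S" by auto
  have "S \<subseteq> V" "finite V" using S g unfolding nearly_indep1_def graph_def by auto
  then have "finite S" by (rule finite_subset)
  then have "card e \<le> card S" using e card_mono by blast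
  moreover have "card e = 2" using g e by (auto simp: graph_def)
  ultimately show ?thesis by simp
qed

lemma part1a:
  assumes g: "graph V E" and ne: "E \<noteq> {}"
  shows "av1 V E \<ge> 2 \<and> (av1 V E = 2 \<longleftrightarrow> (\<forall>S. nearly_indep1 V E S \<longrightarrow> card S = 2))"
proof -
  define F where "F = {S. nearly_indep1 V E S}"
  have finF: "finite F" unfolding F_def nearly_indep1_def
    using g by (simp add: graph_def)
  obtain e where "e \<in> E" using ne by auto
  then have "e \<in> F" unfolding F_def using edge_NI[OF g] by simp
  then have pos: "card F > 0" using finF card_gt_0_iff by blast
  have c2: "\<And>S. S \<in> F \<Longrightarrow> card S \<ge> 2" unfolding F_def using NI_card[OF g] by simp
  have ge: "S1 V E \<ge> 2 * card F" unfolding S1_def F_def[symmetric]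
  proof -
    have "(\<Sum>S\<in>F. card S) \<ge> (\<Sum>S\<in>F. 2)" by (rule sum_mono) (use c2 in auto)
    then show "(\<Sum>S\<in>F. card S) \<ge> 2 * card F" by (simp add: mult.commute)
  qed
  have eq: "S1 V E = 2 * card F \<longleftrightarrow> (\<forall>S\<in>F. card S = 2)"
  proof
    assume h: "S1 V E = 2 * card F"
    show "\<forall>S\<in>F. card S = 2"
    proof (rule ccontr)
      assume "\<not> (\<forall>S\<in>F. card S = 2)"
      then obtain S where S: "S \<in> F" "card S \<noteq> 2" by auto
      have "2 < card S" using c2[OF S(1)] S(2) by linarith
      then have "\<exists>a\<in>F. (2::nat) < card a" using S(1) by blast
      then have "(\<Sum>S\<in>F. (2::nat)) < (\<Sum>S\<in>F. card S)"
        using c2 by (intro sum_strict_mono_ex1[OF finF]) auto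
      moreover have "(\<Sum>S\<in>F. (2::nat)) = 2 * card F" by simp
      moreover have "S1 V E = (\<Sum>S\<in>F. card S)" by (simp add: S1_def F_def)
      ultimately show False using h by linarith
    qed
  next
    assume "\<forall>S\<in>F. card S = 2"
    then have "(\<Sum>S\<in>F. card S) = (\<Sum>S\<in>F. 2)" by simp
    then show "S1 V E = 2 * card F" unfolding S1_def F_def[symmetric] by (simp add: mult.commute)
  qed
  have av: "av1 V E = real (S1 V E) / real (card F)" by (simp add: av1_def sigma1_def F_def)
  have rpos: "real (card F) > 0" using pos by simp
  have "real (2 * card F) \<le> real (S1 V E)" using ge by (rule of_nat_mono)
  then have r: "2 * real (card F) \<le> real (S1 V E)" by simp
  have "av1 V E \<ge> 2" unfolding av using r rpos by (simp add: pos_le_divide_eq)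
  moreover have "av1 V E = 2 \<longleftrightarrow> real (S1 V E) = real (2 * card F)" unfolding av using rpos
    by (simp add: nonzero_divide_eq_eq)
  then have "av1 V E = 2 \<longleftrightarrow> S1 V E = 2 * card F" using of_nat_eq_iff by blast
  ultimately show ?thesis using eq F_def by auto
qed

lemma nbrs_sub: "graph V E \<Longrightarrow> nbrs E u \<subseteq> V"
  unfolding nbrs_def graph_def by auto

lemma part1b:
  assumes g: "graph V E"
  shows "(\<forall>S. nearly_indep1 V E S \<longrightarrow> card S = 2) \<longleftrightarrow> (\<forall>u v. {u, v} \<in> E \<longrightarrow> nbrs E u \<union> nbrs E v = V)"
proof
  assume h: "\<forall>S. nearly_indep1 V E S \<longrightarrow> card S = 2"
  show "\<forall>u v. {u, v} \<in> E \<longrightarrow> nbrs E u \<union> nbrs E v = V"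
  proof (intro allI impI)
    fix u v assume uv: "{u,v} \<in> E"
    have uvc: "card {u,v} = 2" "{u,v} \<subseteq> V" using g uv unfolding graph_def by auto
    have neq: "u \<noteq> v" using uvc(1) by (cases "u = v") auto
    have uvV: "u \<in> V" "v \<in> V" using uvc(2) by auto
    show "nbrs E u \<union> nbrs E v = V"
    proof
      show "nbrs E u \<union> nbrs E v \<subseteq> V" using nbrs_sub[OF g] by auto
      show "V \<subseteq> nbrs E u \<union> nbrs E v"
      proof
        fix x assume xV: "x \<in> V"
        show "x \<in> nbrs E u \<union> nbrs E v"
        proof (rule ccontr)
          assume nx: "x \<notin> nbrs E u \<union> nbrs E v"
          then have xu: "{x,u} \<notin> E" and xv: "{x,v} \<notin> E" by (auto simp: nbrs_def)
          have "x \<noteq> u" using nx uv by (auto simp: nbrs_def)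
          moreover have "x \<noteq> v"
          proof
            assume "x = v"
            moreover have "{v,u} \<in> E" using uv by (simp add: insert_commute[of v u])
            ultimately show False using nx by (auto simp: nbrs_def)
          qed
          ultimately have c3: "card {u,v,x} = 3" using neq by auto
          have "{e\<in>E. e \<subseteq> {u,v,x}} = {{u,v}}"
          proof
            show "{e\<in>E. e \<subseteq> {u,v,x}} \<subseteq> {{u,v}}"
            proof
              fix e assume e: "e \<in> {e\<in>E. e \<subseteq> {u,v,x}}"
              have eE: "e \<in> E" and esub: "e \<subseteq> {u,v,x}" using e by auto
              obtain a b where ab: "e = {a,b}" "a \<noteq> b" using graph_edge[OF g eE] by blast
              have "a \<in> {u,v,x}" "b \<in> {u,v,x}" using esub ab by auto
              then have "{a,b} = {u,v} \<or> {a,b} = {x,u} \<or> {a,b} = {x,v}"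
                using ab(2) by (elim insertE emptyE; auto simp: doubleton_eq_iff)
              moreover have "{a,b} \<noteq> {x,u}" using xu eE ab(1) by metis
              moreover have "{a,b} \<noteq> {x,v}" using xv eE ab(1) by metis
              ultimately show "e \<in> {{u,v}}" using ab(1) by simp
            qed
          next
            show "{{u,v}} \<subseteq> {e\<in>E. e \<subseteq> {u,v,x}}" using uv by blast
          qed
          then have "nearly_indep1 V E {u,v,x}" using uvV xV by (simp add: nearly_indep1_def)
          then show False using h c3 by auto
        qed
      qed
    qed
  qed
next
  assume h: "\<forall>u v. {u, v} \<in> E \<longrightarrow> nbrs E u \<union> nbrs E v = V"
  show "\<forall>S. nearly_indep1 V E S \<longrightarrow> card S = 2"
  proof (intro allI impI)
    fix S assume S: "nearly_indep1 V E S"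
    then have "card {e'\<in>E. e' \<subseteq> S} = 1" unfolding nearly_indep1_def by simp
    then obtain e where e1: "{e'\<in>E. e' \<subseteq> S} = {e}" by (rule card_1_singletonE)
    then have eE: "e \<in> E" "e \<subseteq> S" by auto
    obtain u v where uv: "e = {u,v}" "u \<noteq> v" using graph_edge[OF g eE(1)] by blast
    have c2: "card S \<ge> 2" using NI_card[OF g S] .
    show "card S = 2"
    proof (rule ccontr)
      assume "card S \<noteq> 2"
      then have "card S > card {u,v}" using c2 uv by auto
      then have "\<not> S \<subseteq> {u,v}" using card_mono[of "{u,v}" S] by auto
      then obtain x where x: "x \<in> S" "x \<notin> {u,v}" by blast
      have xV: "x \<in> V" using S x by (auto simp: nearly_indep1_def)
      then have "x \<in> nbrs E u \<union> nbrs E v" using h eE uv by blast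
      then have "{x,u} \<in> E \<or> {x,v} \<in> E" by (auto simp: nbrs_def)
      moreover have "{x,u} \<subseteq> S" "{x,v} \<subseteq> S" "{x,u} \<noteq> e" "{x,v} \<noteq> e"
        using x eE uv by (auto simp: doubleton_eq_iff)
      ultimately obtain f where f: "f \<in> E" "f \<subseteq> S" "f \<noteq> e" by blast
      then show False using e1 by auto
    qed
  qed
qed

lemma part1:
  assumes "graph V E" "E \<noteq> {}"
  shows "av1 V E \<ge> 2 \<and> (av1 V E = 2 \<longleftrightarrow> (\<forall>u v. {u, v} \<in> E \<longrightarrow> nbrs E u \<union> nbrs E v = V))"
  using part1a[OF assms] part1b[OF assms(1)] by blast

lemma sw: "{x,y} \<in> E \<Longrightarrow> {y,x} \<in> E"
  by (simp add: insert_commute)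

lemma cyc3:
  assumes "{a,b} \<in> E" "{b,c} \<in> E" "{c,a} \<in> E" "a \<noteq> b" "b \<noteq> c" "a \<noteq> c"
    "a \<in> V" "b \<in> V" "c \<in> V"
  shows "has_cycle V E"
  unfolding has_cycle_def
proof (intro exI[of _ "[a,b,c]"] conjI allI impI)
  fix i assume "i + 1 < length [a,b,c]"
  then have "i = 0 \<or> i = 1" by auto
  then show "{[a,b,c] ! i, [a,b,c] ! (i + 1)} \<in> E" using assms by auto
qed (use assms in auto)

lemma cyc4:
  assumes "{a,b} \<in> E" "{b,c} \<in> E" "{c,d} \<in> E" "{d,a} \<in> E"
    "a \<noteq> b" "a \<noteq> c" "a \<noteq> d" "b \<noteq> c" "b \<noteq> d" "c \<noteq> d"
    "a \<in> V" "b \<in> V" "c \<in> V" "d \<in> V"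
  shows "has_cycle V E"
  unfolding has_cycle_def
proof (intro exI[of _ "[a,b,c,d]"] conjI allI impI)
  fix i assume "i + 1 < length [a,b,c,d]"
  then have "i = 0 \<or> i = 1 \<or> i = 2" by auto
  then show "{[a,b,c,d] ! i, [a,b,c,d] ! (i + 1)} \<in> E" using assms by auto
qed (use assms in auto)

lemma star_center:
  assumes g: "graph V E" and nc: "\<not> has_cycle V E" and cV: "c \<in> V"
    and cen: "\<forall>w\<in>V - {c}. {w,c} \<in> E"
  shows "is_star V E"
  unfolding is_star_def
proof (intro bexI[OF _ cV] equalityI subsetI)
  fix e assume eE: "e \<in> E"
  obtain p q where pq: "e = {p,q}" "p \<noteq> q" "p \<in> V" "q \<in> V" using graph_edge[OF g eE] by blast
  show "e \<in> {{c, v} |v. v \<in> V - {c}}"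
  proof (cases "p = c \<or> q = c")
    case True
    then show ?thesis
    proof
      assume "p = c" then show ?thesis using pq by auto
    next
      assume "q = c" then have "e = {c,p}" using pq by (simp add: insert_commute)
      then show ?thesis using pq \<open>q = c\<close> by auto
    qed
  next
    case False
    then have qc: "{q,c} \<in> E" and pc: "{p,c} \<in> E" using cen pq by auto
    have "{c,p} \<in> E" using sw[OF pc] .
    then have "has_cycle V E" using cyc3[of p q E c V] pq eE False cV qc by auto
    then show ?thesis using nc by simp
  qed
next
  fix e assume "e \<in> {{c, v} |v. v \<in> V - {c}}"
  then obtain v where v: "e = {c,v}" "v \<in> V - {c}" by auto
  then have "{v,c} \<in> E" using cen by auto
  then show "e \<in> E" using sw v(1) by auto
qed

lemma dom_star:
  assumes g: "graph V E" and nc: "\<not> has_cycle V E" and ne: "E \<noteq> {}"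
    and dom: "\<forall>u v. {u, v} \<in> E \<longrightarrow> nbrs E u \<union> nbrs E v = V"
  shows "is_star V E"
proof -
  obtain e where eE: "e \<in> E" using ne by auto
  obtain a b where ab: "e = {a,b}" "a \<noteq> b" "a \<in> V" "b \<in> V" using graph_edge[OF g eE] by blast
  have abE: "{a,b} \<in> E" using eE ab by simp
  have dm: "{w,u} \<in> E \<or> {w,v} \<in> E" if "{u,v} \<in> E" "w \<in> V" for u v w
  proof -
    have "nbrs E u \<union> nbrs E v = V" using dom that(1) by simp
    then have "w \<in> nbrs E u \<union> nbrs E v" using that(2) by simp
    then show "{w,u} \<in> E \<or> {w,v} \<in> E" by (auto simp: nbrs_def)
  qed
  show ?thesis
  proof (cases "\<forall>w\<in>V - {a}. {w,a} \<in> E")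
    case True
    then show ?thesis using star_center[OF g nc ab(3)] by simp
  next
    case Fa: False
    then obtain w where w: "w \<in> V" "w \<noteq> a" "{w,a} \<notin> E" by auto
    show ?thesis
    proof (cases "\<forall>w\<in>V - {b}. {w,b} \<in> E")
      case True
      then show ?thesis using star_center[OF g nc ab(4)] by simp
    next
      case False
      then obtain x where x: "x \<in> V" "x \<noteq> b" "{x,b} \<notin> E" by auto
      have ba: "{b,a} \<in> E" using sw[OF abE] .
      have wb': "w \<noteq> b" using w(3) ba by auto
      have wb: "{w,b} \<in> E" using dm[OF abE w(1)] w(3) by simp
      have xa': "x \<noteq> a" using x(3) abE by auto
      have xa: "{x,a} \<in> E" using dm[OF abE x(1)] x(3) by simp
      have wx': "w \<noteq> x" using w(3) xa by auto
      have "{w,x} \<in> E \<or> {w,a} \<in> E" using dm[OF xa w(1)] .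
      then have wx: "{w,x} \<in> E" using w(3) by simp
      have bw: "{b,w} \<in> E" using sw[OF wb] .
      have "has_cycle V E"
        using cyc4[of a b E w x V] abE bw wx xa ab w x wb' xa' wx' by auto
      then show ?thesis using nc by simp
    qed
  qed
qed

lemma star_E_mem: "e \<in> star_E n \<longleftrightarrow> (\<exists>i. e = {0,i} \<and> 1 \<le> i \<and> i < n)"
  unfolding star_E_def by auto

lemma star_graph: "graph (star_V n) (star_E n)"
  unfolding graph_def star_V_def
proof (intro conjI ballI)
  fix e assume "e \<in> star_E n"
  then obtain i where i: "e = {0,i}" "1 \<le> i" "i < n" using star_E_mem by blast
  then show "e \<subseteq> {0..<n}" "card e = 2" by auto
qed simp

lemma star_dom: "\<forall>u v. {u, v} \<in> star_E n \<longrightarrow> nbrs (star_E n) u \<union> nbrs (star_E n) v = star_V n"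
proof (intro allI impI)
  fix u v assume uv: "{u,v} \<in> star_E n"
  then obtain i where i: "{u,v} = {0,i}" "1 \<le> i" "i < n" using star_E_mem by blast
  have z: "0 \<in> nbrs (star_E n) i" unfolding nbrs_def star_E_mem using i
    by (auto simp: insert_commute)
  have nz: "x \<in> nbrs (star_E n) 0" if "x \<in> {1..<n}" for x
    unfolding nbrs_def star_E_mem using that by (auto simp: insert_commute)
  have sub: "nbrs (star_E n) y \<subseteq> star_V n" for y
    using nbrs_sub[OF star_graph] .
  have uv': "(u = 0 \<and> v = i) \<or> (u = i \<and> v = 0)" using i(1) by (auto simp: doubleton_eq_iff)
  have "star_V n \<subseteq> nbrs (star_E n) u \<union> nbrs (star_E n) v"
  proof
    fix x assume "x \<in> star_V n"
    then have "x = 0 \<or> x \<in> {1..<n}" unfolding star_V_def by auto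
    then show "x \<in> nbrs (star_E n) u \<union> nbrs (star_E n) v" using uv' z nz by auto
  qed
  then show "nbrs (star_E n) u \<union> nbrs (star_E n) v = star_V n" using sub by auto
qed

lemma star_ne: "n \<ge> 2 \<Longrightarrow> star_E n \<noteq> {}"
  using star_E_mem[of "{0,1}" n] by auto

lemma star_av: "n \<ge> 2 \<Longrightarrow> av1 (star_V n) (star_E n) = 2"
  using part1[OF star_graph star_ne] star_dom by blast

lemma star_edge0: "{x,y} \<in> star_E n \<Longrightarrow> x = 0 \<or> y = 0"
  unfolding star_E_mem by (auto simp: doubleton_eq_iff)

lemma star_nocycle: "\<not> has_cycle (star_V n) (star_E n)"
proof
  assume "has_cycle (star_V n) (star_E n)"
  then obtain vs where vs: "length vs \<ge> 3" "distinct vs"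
    "\<forall>i. i + 1 < length vs \<longrightarrow> {vs ! i, vs ! (i + 1)} \<in> star_E n"
    "{last vs, hd vs} \<in> star_E n" unfolding has_cycle_def by blast
  have "{vs ! 0, vs ! 1} \<in> star_E n" using vs(3) vs(1) by auto
  then have e0: "vs!0 = 0 \<or> vs!1 = 0" by (rule star_edge0)
  have "{vs ! 1, vs ! 2} \<in> star_E n" using vs(3)[rule_format, of 1] vs(1) by (simp add: numeral_2_eq_2)
  then have e1: "vs!1 = 0 \<or> vs!2 = 0" by (rule star_edge0)
  have d02: "vs!0 \<noteq> vs!2" using vs(1,2) by (subst nth_eq_iff_index_eq) auto
  have d01: "vs!0 \<noteq> vs!1" using vs(1,2) by (subst nth_eq_iff_index_eq) auto
  have d12: "vs!1 \<noteq> vs!2" using vs(1,2) by (subst nth_eq_iff_index_eq) auto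
  have b0: "vs!1 = 0" using e0 e1 d02 by auto
  show False
  proof (cases "length vs = 3")
    case True
    then have "last vs = vs!2" by (subst last_conv_nth) auto
    moreover have "hd vs = vs!0" using vs(1) by (subst hd_conv_nth) auto
    ultimately have "{vs!2, vs!0} \<in> star_E n" using vs(4) by simp
    then have "vs!2 = 0 \<or> vs!0 = 0" by (rule star_edge0)
    then show False using b0 d01 d12 by auto
  next
    case False
    then have l4: "length vs \<ge> 4" using vs(1) by simp
    have "{vs ! 2, vs ! 3} \<in> star_E n" using vs(3)[rule_format, of 2] l4 by auto
    then have "vs!2 = 0 \<or> vs!3 = 0" by (rule star_edge0)
    moreover have "vs!1 \<noteq> vs!3" using l4 vs(2) by (subst nth_eq_iff_index_eq) auto
    ultimately show False using b0 d12 by auto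
  qed
qed

lemma star_tree: "n \<ge> 2 \<Longrightarrow> is_tree (star_V n) (star_E n)"
  unfolding is_tree_def
proof (intro conjI)
  assume n: "n \<ge> 2"
  show "graph (star_V n) (star_E n)" by (rule star_graph)
  show "star_V n \<noteq> {}" using n unfolding star_V_def by auto
  show "\<not> has_cycle (star_V n) (star_E n)" by (rule star_nocycle)
  let ?R = "{(x, y). {x, y} \<in> star_E n}"
  have to0: "(u, 0) \<in> ?R\<^sup>*" if "u \<in> star_V n" for u
  proof (cases "u = 0")
    case False
    then have "{0,u} \<in> star_E n" using that unfolding star_E_mem star_V_def by auto
    then have "{u,0} \<in> star_E n" by (rule sw)
    then show ?thesis by (intro r_into_rtrancl) simp
  qed simp
  have from0: "(0, u) \<in> ?R\<^sup>*" if "u \<in> star_V n" for u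
  proof (cases "u = 0")
    case False
    then have "{0,u} \<in> star_E n" using that unfolding star_E_mem star_V_def by auto
    then show ?thesis by (intro r_into_rtrancl) simp
  qed simp
  show "connected_graph (star_V n) (star_E n)" unfolding connected_graph_def
  proof (intro ballI)
    fix u v assume "u \<in> star_V n" "v \<in> star_V n"
    then show "(u, v) \<in> ?R\<^sup>*" by (rule rtrancl_trans[OF to0 from0])
  qed
qed

lemma tree_ne:
  assumes t: "is_tree V E" and c: "card V \<ge> 2"
  shows "E \<noteq> {}"
proof -
  obtain A where A: "A \<subseteq> V" "card A = 2"
    using obtain_subset_with_card_n[of 2 V] c by auto
  then obtain u v where uv: "A = {u,v}" "u \<noteq> v" unfolding card_2_iff by auto
  then have uvV: "u \<in> V" "v \<in> V" using A by auto
  have "(u, v) \<in> {(x, y). {x, y} \<in> E}\<^sup>*" using t uvV unfolding is_tree_def connected_graph_def by blast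
  then obtain y where "(u, y) \<in> {(x, y). {x, y} \<in> E}" using uv(2)
    by (cases rule: converse_rtranclE) auto
  then show ?thesis by auto
qed

theorem mainTheorem7:
  shows "(\<forall>(V :: 'a set) E. graph V E \<and> E \<noteq> {} \<longrightarrow>
           av1 V E \<ge> 2 \<and>
           (av1 V E = 2 \<longleftrightarrow> (\<forall>u v. {u, v} \<in> E \<longrightarrow> nbrs E u \<union> nbrs E v = V))) \<and>
         (\<forall>n \<ge> 2.
           is_tree (star_V n) (star_E n) \<and>
           (\<forall>(V :: 'a set) E. is_tree V E \<and> card V = n \<longrightarrow>
              av1 (star_V n) (star_E n) \<le> av1 V E \<and>
              (av1 V E = av1 (star_V n) (star_E n) \<longrightarrow> is_star V E)) \<and>
           (\<forall>(V :: 'a set) E. graph V E \<and> card V = n \<and> E \<noteq> {} \<longrightarrow>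
              av1 (star_V n) (star_E n) \<le> av1 V E))"
proof (intro conjI allI impI)
  fix V :: "'a set" and E assume "graph V E \<and> E \<noteq> {}"
  then show "2 \<le> av1 V E" using part1 by blast
next
  fix V :: "'a set" and E assume "graph V E \<and> E \<noteq> {}"
  then show "(av1 V E = 2) = (\<forall>u v. {u, v} \<in> E \<longrightarrow> nbrs E u \<union> nbrs E v = V)" using part1 by blast
next
  fix n :: nat assume "2 \<le> n"
  then show "is_tree (star_V n) (star_E n)" by (rule star_tree)
next
  fix n :: nat and V :: "'a set" and E assume n: "2 \<le> n" and t: "is_tree V E \<and> card V = n"
  have g: "graph V E" using t unfolding is_tree_def by blast
  have ne: "E \<noteq> {}" using tree_ne t n by blast
  show "av1 (star_V n) (star_E n) \<le> av1 V E" using part1[OF g ne] star_av[OF n] by simp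
next
  fix n :: nat and V :: "'a set" and E assume n: "2 \<le> n" and t: "is_tree V E \<and> card V = n"
    and eq: "av1 V E = av1 (star_V n) (star_E n)"
  have g: "graph V E" and nc: "\<not> has_cycle V E" using t unfolding is_tree_def by blast+
  have ne: "E \<noteq> {}" using tree_ne t n by blast
  have "av1 V E = 2" using eq star_av[OF n] by simp
  then have "\<forall>u v. {u, v} \<in> E \<longrightarrow> nbrs E u \<union> nbrs E v = V" using part1[OF g ne] by blast
  then show "is_star V E" using dom_star[OF g nc ne] by blast
next
  fix n :: nat and V :: "'a set" and E assume n: "2 \<le> n" and t: "graph V E \<and> card V = n \<and> E \<noteq> {}"
  then have g: "graph V E" and ne: "E \<noteq> {}" by auto
  show "av1 (star_V n) (star_E n) \<le> av1 V E" using part1[OF g ne] star_av[OF n] by simp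
qed

end
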